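(* Let $Y$ be a random simplicial complex on $[n]=\{0,\dots,n\}$ drawn from the lower model in the medial regime, with constants $0<p\le P<1$ such that $p\le p_\sigma\le P$ for all $\sigma$. Then $Y$ is connected with probability at least $1-C\exp\!\big(-\tfrac{n^{1/2}}{2}\big)$, where $C>0$ is a constant depending on $p$ and independent of $n$.
   Context: Lower model: each non-empty proper subset $\sigma\subsetneq[n]$ is included independently with probability $p_\sigma$ into a random hypergraph $X$, and $Y$ is the largest simplicial complex contained in $X$ ($\sigma\in Y$ iff every non-empty $\tau\subseteq\sigma$ lies in $X$). Medial regime: $p,P\in(0,1)$ are independent of $n$. *)

theory Defs
  imports "HOL-Probability.Probability"
begin

definition faces :: "nat \<Rightarrow> nat set set" where
  "faces n = {\<sigma>. \<sigma> \<subseteq> {0..n} \<and> \<sigma> \<noteq> {} \<and> \<sigma> \<noteq> {0..n}}"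

definition lower_hyp_pmf :: "nat \<Rightarrow> (nat set \<Rightarrow> real) \<Rightarrow> (nat set \<Rightarrow> bool) pmf" where
  "lower_hyp_pmf n q = Pi_pmf (faces n) False (\<lambda>\<sigma>. bernoulli_pmf (q \<sigma>))"

definition hyp_of :: "nat \<Rightarrow> (nat set \<Rightarrow> bool) \<Rightarrow> nat set set" where
  "hyp_of n f = {\<sigma> \<in> faces n. f \<sigma>}"

definition largest_complex :: "nat set set \<Rightarrow> nat set set" where
  "largest_complex X = {\<sigma>. \<sigma> \<noteq> {} \<and> (\<forall>\<tau>. \<tau> \<noteq> {} \<and> \<tau> \<subseteq> \<sigma> \<longrightarrow> \<tau> \<in> X)}"

definition complex_vertices :: "nat set set \<Rightarrow> nat set" where
  "complex_vertices K = {v. {v} \<in> K}"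

definition complex_edge_rel :: "nat set set \<Rightarrow> (nat \<times> nat) set" where
  "complex_edge_rel K = {(u, v). u \<noteq> v \<and> {u, v} \<in> K}"

definition complex_connected :: "nat set set \<Rightarrow> bool" where
  "complex_connected K \<longleftrightarrow> complex_vertices K \<noteq> {} \<and>
     (\<forall>u \<in> complex_vertices K. \<forall>v \<in> complex_vertices K. (u, v) \<in> (complex_edge_rel K)\<^sup>*)"

end

theory Submission
  imports Defs
begin

lemma prob_pair_times:
  "measure_pmf.prob (pair_pmf M N) (A \<times> B) = measure_pmf.prob M A * measure_pmf.prob N B"
proof -
  have "measure_pmf.prob (pair_pmf M N) (A \<times> B) =
        measure_pmf.prob (pair_pmf M N) ((A \<inter> set_pmf M) \<times> (B \<inter> set_pmf N))"
    by (subst (1 2) measure_Int_set_pmf[symmetric]) (simp add: set_pair_pmf Times_Int_Times)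
  also have "\<dots> = measure_pmf.prob M (A \<inter> set_pmf M) * measure_pmf.prob N (B \<inter> set_pmf N)"
    by (rule measure_pmf_prob_product) (auto intro: countable_subset)
  also have "\<dots> = measure_pmf.prob M A * measure_pmf.prob N B"
    by (simp add: measure_Int_set_pmf)
  finally show ?thesis .
qed

lemma indep_prod:
  fixes A :: "'a set" and G :: "'i \<Rightarrow> 'a set" and E :: "'i \<Rightarrow> ('a \<Rightarrow> 'b) \<Rightarrow> bool"
  assumes "finite W" "finite A" "\<forall>w\<in>W. G w \<subseteq> A"
    "\<forall>w1\<in>W. \<forall>w2\<in>W. w1 \<noteq> w2 \<longrightarrow> G w1 \<inter> G w2 = {}"
    "\<forall>w\<in>W. \<forall>f g. (\<forall>x\<in>G w. f x = g x) \<longrightarrow> E w f = E w g"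
  shows "measure_pmf.prob (Pi_pmf A d p) {f. \<forall>w\<in>W. E w f} =
         (\<Prod>w\<in>W. measure_pmf.prob (Pi_pmf (G w) d p) {f. E w f})"
  using assms
proof (induction W arbitrary: A rule: finite_induct)
  case empty
  then show ?case by simp
next
  case (insert w0 W A)
  define R where "R = A - G w0"
  have finG: "finite (G w0)" using insert.prems by (meson finite_subset insertI1)
  have finR: "finite R" using insert.prems R_def by simp
  have AU: "A = G w0 \<union> R" using insert.prems R_def by auto
  have GR: "\<forall>w\<in>W. G w \<subseteq> R"
  proof
    fix w assume wW: "w \<in> W"
    then have "w \<noteq> w0" using insert.hyps(2) by auto
    then have "G w \<inter> G w0 = {}" using insert.prems(3) wW by simp
    moreover have "G w \<subseteq> A" using insert.prems(2) wW by simp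
    ultimately show "G w \<subseteq> R" unfolding R_def by blast
  qed
  have loc: "E w f = E w g" if "w \<in> insert w0 W" "\<forall>x\<in>G w. f x = g x" for w f g
    using insert.prems(4) that by blast
  have pre1: "(\<forall>w\<in>insert w0 W. E w (\<lambda>x. if x \<in> G w0 then f x else g x)) \<longleftrightarrow> E w0 f \<and> (\<forall>w\<in>W. E w g)" for f g
  proof -
    have "E w0 (\<lambda>x. if x \<in> G w0 then f x else g x) = E w0 f"
      using loc[of w0 "(\<lambda>x. if x \<in> G w0 then f x else g x)" f] by simp
    moreover have "E w (\<lambda>x. if x \<in> G w0 then f x else g x) = E w g" if wW: "w \<in> W" for w
    proof -
      have "\<forall>x\<in>G w. (\<lambda>x. if x \<in> G w0 then f x else g x) x = g x"
        using GR wW R_def by auto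
      then show ?thesis using loc[of w "(\<lambda>x. if x \<in> G w0 then f x else g x)" g] wW by simp
    qed
    ultimately show ?thesis by auto
  qed
  have pre: "(\<lambda>(f,g) x. if x \<in> G w0 then f x else g x) -` {f. \<forall>w\<in>insert w0 W. E w f}
      = {f. E w0 f} \<times> {g. \<forall>w\<in>W. E w g}"
    using pre1 by (auto simp del: ball_simps)
  have "measure_pmf.prob (Pi_pmf A d p) {f. \<forall>w\<in>insert w0 W. E w f}
     = measure_pmf.prob (pair_pmf (Pi_pmf (G w0) d p) (Pi_pmf R d p)) ({f. E w0 f} \<times> {g. \<forall>w\<in>W. E w g})"
    unfolding AU using finG finR R_def
    by (subst Pi_pmf_union) (auto simp: pre[symmetric])
  also have "\<dots> = measure_pmf.prob (Pi_pmf (G w0) d p) {f. E w0 f} *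
        measure_pmf.prob (Pi_pmf R d p) {g. \<forall>w\<in>W. E w g}"
    by (rule prob_pair_times)
  also have "measure_pmf.prob (Pi_pmf R d p) {g. \<forall>w\<in>W. E w g} =
      (\<Prod>w\<in>W. measure_pmf.prob (Pi_pmf (G w) d p) {f. E w f})"
  proof -
    have d1: "\<forall>w1\<in>W. \<forall>w2\<in>W. w1 \<noteq> w2 \<longrightarrow> G w1 \<inter> G w2 = {}" using insert.prems(3) by simp
    have d2: "\<forall>w\<in>W. \<forall>f g. (\<forall>x\<in>G w. f x = g x) \<longrightarrow> E w f = E w g" using insert.prems(4) by simp
    show ?thesis by (rule insert.IH[OF finR GR d1 d2])
  qed
  finally show ?case using insert.hyps by simp
qed


lemma finite_faces: "finite (faces n)"
proof -
  have "faces n \<subseteq> Pow {0..n}" unfolding faces_def by auto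
  then show ?thesis by (rule finite_subset) simp
qed

lemma pair_in_faces:
  assumes "n \<ge> 2" "u \<le> n" "w \<le> n"
  shows "{u, w} \<in> faces n"
proof -
  have "{u, w} \<noteq> {0..n}"
  proof
    assume eq: "{u, w} = {0..n}"
    have "(0::nat) \<in> {0..n}" "(1::nat) \<in> {0..n}" "(2::nat) \<in> {0..n}" using assms(1) by auto
    then have "(0::nat) \<in> {u, w}" "(1::nat) \<in> {u, w}" "(2::nat) \<in> {u, w}" unfolding eq by blast+
    then show False by auto
  qed
  moreover have "{u, w} \<subseteq> {0..n}" using assms by simp
  ultimately show ?thesis unfolding faces_def by blast
qed

lemma single_in_faces:
  assumes "n \<ge> 1" "u \<le> n"
  shows "{u} \<in> faces n"
proof -
  have "{u} \<noteq> {0..n}"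
  proof
    assume eq: "{u} = {0..n}"
    have "(0::nat) \<in> {0..n}" "(1::nat) \<in> {0..n}" using assms(1) by auto
    then have "(0::nat) \<in> {u}" "(1::nat) \<in> {u}" unfolding eq by blast+
    then show False by auto
  qed
  moreover have "{u} \<subseteq> {0..n}" using assms by simp
  ultimately show ?thesis unfolding faces_def by blast
qed

lemma measure_bern_True:
  assumes "0 \<le> a" "a \<le> 1"
  shows "measure_pmf.prob (bernoulli_pmf a) {True} = a"
  using assms by (simp add: measure_pmf_single)

lemma measure_bern_False:
  assumes "0 \<le> a" "a \<le> 1"
  shows "measure_pmf.prob (bernoulli_pmf a) {False} = 1 - a"
  using assms by (simp add: measure_pmf_single)

lemma empty_bound:
  assumes n1: "n \<ge> 1" and p0: "0 < p" and P1: "P < 1"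
    and q: "\<forall>\<sigma> \<in> faces n. p \<le> q \<sigma> \<and> q \<sigma> \<le> P"
  shows "measure_pmf.prob (lower_hyp_pmf n q) {f. \<forall>v\<in>{0..n}. \<not> f {v}} \<le> (1 - p)^(n+1)"
proof -
  have "measure_pmf.prob (lower_hyp_pmf n q) {f. \<forall>v\<in>{0..n}. \<not> f {v}} =
     (\<Prod>v\<in>{0..n}. measure_pmf.prob (Pi_pmf {{v}} False (\<lambda>\<sigma>. bernoulli_pmf (q \<sigma>))) {f. \<not> f {v}})"
    unfolding lower_hyp_pmf_def
    by (rule indep_prod) (auto simp: finite_faces intro: single_in_faces[OF n1])
  also have "\<dots> = (\<Prod>v\<in>{0..n}. 1 - q {v})"
  proof (rule prod.cong[OF refl])
    fix v assume v: "v \<in> {0..n}"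
    have fv: "{v} \<in> faces n" using v n1 single_in_faces by simp
    have "{f. \<not> f {v}} = Pi {{v}} (\<lambda>_. {False})" by auto
    then have "measure_pmf.prob (Pi_pmf {{v}} False (\<lambda>\<sigma>. bernoulli_pmf (q \<sigma>))) {f. \<not> f {v}}
       = (\<Prod>\<sigma>\<in>{{v}}. measure_pmf.prob (bernoulli_pmf (q \<sigma>)) {False})"
      by (simp add: measure_Pi_pmf_Pi)
    also have "\<dots> = 1 - q {v}"
    proof -
      have "p \<le> q {v}" "q {v} \<le> P" using q fv by auto
      then show ?thesis using p0 P1 by (simp add: measure_bern_False)
    qed
    finally show "measure_pmf.prob (Pi_pmf {{v}} False (\<lambda>\<sigma>. bernoulli_pmf (q \<sigma>))) {f. \<not> f {v}} = 1 - q {v}" .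
  qed
  also have "\<dots> \<le> (\<Prod>v\<in>{0..n}. 1 - p)"
  proof (rule prod_mono)
    fix v assume v: "v \<in> {0..n}"
    have fv: "{v} \<in> faces n" using v n1 single_in_faces by simp
    then show "0 \<le> 1 - q {v} \<and> 1 - q {v} \<le> 1 - p" using q P1 by force
  qed
  also have "\<dots> = (1 - p)^(n+1)" by simp
  finally show ?thesis .
qed

lemma triple_bound:
  assumes n2: "n \<ge> 2" and p0: "0 < p" and P1: "P < 1"
    and q: "\<forall>\<sigma> \<in> faces n. p \<le> q \<sigma> \<and> q \<sigma> \<le> P"
    and u: "u \<le> n" and v: "v \<le> n" and uv: "u \<noteq> v"
  shows "measure_pmf.prob (lower_hyp_pmf n q)
           {f. \<forall>w\<in>{0..n} - {u, v}. \<not> (f {w} \<and> f {u, w} \<and> f {v, w})} \<le> (1 - p^3)^(n-1)"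
proof -
  define G where "G w = {{w}, {u, w}, {v, w}}" for w :: nat
  have GF: "\<forall>w\<in>{0..n} - {u, v}. G w \<subseteq> faces n"
    using n2 u v unfolding G_def by (auto intro!: pair_in_faces single_in_faces)
  have Gd: "\<forall>w1\<in>{0..n} - {u, v}. \<forall>w2\<in>{0..n} - {u, v}. w1 \<noteq> w2 \<longrightarrow> G w1 \<inter> G w2 = {}"
    unfolding G_def by (auto simp: doubleton_eq_iff)
  have "measure_pmf.prob (lower_hyp_pmf n q)
           {f. \<forall>w\<in>{0..n} - {u, v}. \<not> (f {w} \<and> f {u, w} \<and> f {v, w})} =
     (\<Prod>w\<in>{0..n} - {u, v}. measure_pmf.prob (Pi_pmf (G w) False (\<lambda>\<sigma>. bernoulli_pmf (q \<sigma>)))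
          {f. \<not> (f {w} \<and> f {u, w} \<and> f {v, w})})"
    unfolding lower_hyp_pmf_def
    by (rule indep_prod) (use GF Gd in \<open>auto simp: finite_faces G_def\<close>)
  also have "\<dots> \<le> (\<Prod>w\<in>{0..n} - {u, v}. 1 - p^3)"
  proof (rule prod_mono)
    fix w assume w: "w \<in> {0..n} - {u, v}"
    have card3: "card (G w) = 3" using w uv unfolding G_def by (auto simp: card_insert_if doubleton_eq_iff)
    have fin: "finite (G w)" unfolding G_def by simp
    have qG: "\<forall>\<sigma>\<in>G w. p \<le> q \<sigma> \<and> q \<sigma> \<le> P" using GF w q by blast
    have "{f. \<not> (f {w} \<and> f {u, w} \<and> f {v, w})} = UNIV - Pi (G w) (\<lambda>_. {True})"
      unfolding G_def by auto
    then have "measure_pmf.prob (Pi_pmf (G w) False (\<lambda>\<sigma>. bernoulli_pmf (q \<sigma>)))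
          {f. \<not> (f {w} \<and> f {u, w} \<and> f {v, w})} =
        1 - measure_pmf.prob (Pi_pmf (G w) False (\<lambda>\<sigma>. bernoulli_pmf (q \<sigma>))) (Pi (G w) (\<lambda>_. {True}))"
      using measure_pmf.prob_compl[of "Pi (G w) (\<lambda>_. {True})" "Pi_pmf (G w) False (\<lambda>\<sigma>. bernoulli_pmf (q \<sigma>))"]
      by simp
    also have "measure_pmf.prob (Pi_pmf (G w) False (\<lambda>\<sigma>. bernoulli_pmf (q \<sigma>))) (Pi (G w) (\<lambda>_. {True}))
        = (\<Prod>\<sigma>\<in>G w. q \<sigma>)"
    proof -
      have "measure_pmf.prob (Pi_pmf (G w) False (\<lambda>\<sigma>. bernoulli_pmf (q \<sigma>))) (Pi (G w) (\<lambda>_. {True}))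
        = (\<Prod>\<sigma>\<in>G w. measure_pmf.prob (bernoulli_pmf (q \<sigma>)) {True})"
        using fin by (rule measure_Pi_pmf_Pi)
      also have "\<dots> = (\<Prod>\<sigma>\<in>G w. q \<sigma>)"
        using qG p0 P1 by (intro prod.cong refl measure_bern_True) force+
      finally show ?thesis .
    qed
    finally have fac: "measure_pmf.prob (Pi_pmf (G w) False (\<lambda>\<sigma>. bernoulli_pmf (q \<sigma>)))
          {f. \<not> (f {w} \<and> f {u, w} \<and> f {v, w})} = 1 - (\<Prod>\<sigma>\<in>G w. q \<sigma>)" .
    have "(\<Prod>\<sigma>\<in>G w. q \<sigma>) \<ge> (\<Prod>\<sigma>\<in>G w. p)"
      using qG p0 by (intro prod_mono) force
    then have "(\<Prod>\<sigma>\<in>G w. q \<sigma>) \<ge> p^3" using card3 by simp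
    moreover have "(\<Prod>\<sigma>\<in>G w. q \<sigma>) \<le> 1"
    proof (intro prod_le_1)
      fix x assume "x \<in> G w"
      then have "p \<le> q x" "q x \<le> P" using qG by auto
      then show "0 \<le> q x \<and> q x \<le> 1" using p0 P1 by linarith
    qed
    ultimately show "0 \<le> measure_pmf.prob (Pi_pmf (G w) False (\<lambda>\<sigma>. bernoulli_pmf (q \<sigma>)))
          {f. \<not> (f {w} \<and> f {u, w} \<and> f {v, w})} \<and> measure_pmf.prob (Pi_pmf (G w) False (\<lambda>\<sigma>. bernoulli_pmf (q \<sigma>)))
          {f. \<not> (f {w} \<and> f {u, w} \<and> f {v, w})} \<le> 1 - p^3" unfolding fac by simp
  qed
  also have "\<dots> = (1 - p^3)^(card ({0..n} - {u, v}))" by simp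
  also have "card ({0..n} - {u, v}) = n - 1" using u v uv by (simp add: card_Diff_subset)
  finally show ?thesis .
qed

lemma connected_suff:
  assumes n2: "n \<ge> 2"
    and ex: "\<exists>v\<in>{0..n}. f {v}"
    and tr: "\<forall>u\<in>{0..n}. \<forall>v\<in>{0..n}. u \<noteq> v \<longrightarrow> (\<exists>w\<in>{0..n} - {u, v}. f {w} \<and> f {u, w} \<and> f {v, w})"
  shows "complex_connected (largest_complex (hyp_of n f))"
proof -
  let ?K = "largest_complex (hyp_of n f)"
  have vert: "v \<in> complex_vertices ?K \<longleftrightarrow> v \<le> n \<and> f {v}" for v
  proof -
    have "{v} \<in> ?K \<longleftrightarrow> {v} \<in> hyp_of n f"
      unfolding largest_complex_def by (auto simp: subset_singleton_iff)
    also have "\<dots> \<longleftrightarrow> v \<le> n \<and> f {v}"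
      using n2 single_in_faces[of n v] unfolding hyp_of_def faces_def by auto
    finally show ?thesis unfolding complex_vertices_def by simp
  qed
  have edge: "(u, w) \<in> complex_edge_rel ?K"
    if "u \<le> n" "w \<le> n" "u \<noteq> w" "f {u}" "f {w}" "f {u, w}" for u w
  proof -
    have "\<tau> \<in> hyp_of n f" if "\<tau> \<noteq> {}" "\<tau> \<subseteq> {u, w}" for \<tau>
    proof -
      have "\<tau> = {u} \<or> \<tau> = {w} \<or> \<tau> = {u, w}"
      proof (cases "u \<in> \<tau>"; cases "w \<in> \<tau>")
        assume "u \<in> \<tau>" "w \<in> \<tau>" then show ?thesis using that by blast
      next
        assume "u \<in> \<tau>" "w \<notin> \<tau>" then show ?thesis using that by blast
      next
        assume "u \<notin> \<tau>" "w \<in> \<tau>" then show ?thesis using that by blast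
      next
        assume "u \<notin> \<tau>" "w \<notin> \<tau>" then show ?thesis using that by blast
      qed
      then show ?thesis
        using \<open>u \<le> n\<close> \<open>w \<le> n\<close> \<open>f {u}\<close> \<open>f {w}\<close> \<open>f {u, w}\<close> n2
          single_in_faces[of n u] single_in_faces[of n w] pair_in_faces[of n u w]
        unfolding hyp_of_def by (elim disjE) simp_all
    qed
    then have "{u, w} \<in> ?K" unfolding largest_complex_def by auto
    then show ?thesis unfolding complex_edge_rel_def using \<open>u \<noteq> w\<close> by simp
  qed
  have ne: "complex_vertices ?K \<noteq> {}" using ex vert by auto
  have conn: "(u, v) \<in> (complex_edge_rel ?K)\<^sup>*"
    if "u \<in> complex_vertices ?K" "v \<in> complex_vertices ?K" for u v
  proof (cases "u = v")
    case True then show ?thesis by simp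
  next
    case False
    have uv: "u \<le> n" "f {u}" "v \<le> n" "f {v}" using that vert by auto
    have "\<exists>w\<in>{0..n} - {u, v}. f {w} \<and> f {u, w} \<and> f {v, w}"
      using tr False uv(1) uv(3) by simp
    then obtain w where w: "w \<in> {0..n} - {u, v}" "f {w}" "f {u, w}" "f {v, w}"
      by blast
    have e1: "(u, w) \<in> complex_edge_rel ?K" using w uv by (intro edge) auto
    have wv: "{w, v} = {v, w}" by blast
    have e2: "(w, v) \<in> complex_edge_rel ?K" using w uv by (intro edge) (auto simp: wv)
    show ?thesis using e1 e2 by (meson converse_rtrancl_into_rtrancl r_into_rtrancl)
  qed
  show ?thesis unfolding complex_connected_def by (intro conjI ballI ne conn)
qed



lemma analytic_bound:
  fixes r :: real
  assumes r0: "0 < r" and r1: "r < 1"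
  shows "\<exists>K>0. \<forall>n::nat. n \<ge> 1 \<longrightarrow> (1 + (real n + 1)^2) * r^(n-1) \<le> K * exp (- sqrt (real n) / 2)"
proof -
  define L where "L = - ln r"
  have L0: "L > 0" using r0 r1 unfolding L_def by simp
  define K where "K = 80 / (L^2 * r) * exp (1 / (8 * L))"
  have K0: "K > 0" using L0 r0 unfolding K_def by simp
  have "(1 + (real n + 1)^2) * r^(n-1) \<le> K * exp (- sqrt (real n) / 2)" if n1: "n \<ge> 1" for n :: nat
  proof -
    define x where "x = real n"
    have x1: "x \<ge> 1" using n1 unfolding x_def by simp
    have rn: "r^n = exp (- L * x)"
    proof -
      have "r^n = exp (ln r)^n" using r0 by simp
      also have "\<dots> = exp (x * ln r)" unfolding x_def by (simp add: exp_of_nat_mult)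
      finally show ?thesis unfolding L_def by simp
    qed
    have rn1: "r^(n-1) = r^n / r"
      using n1 r0 by (metis One_nat_def Suc_pred nonzero_mult_div_cancel_left not_le not_less_eq_eq
          order_less_irrefl power_Suc)
    have c: "1 + (x + 1)^2 \<le> 5 * x^2"
    proof -
      have "x \<le> x^2" using x1 by (simp add: power2_eq_square)
      moreover have "1 \<le> x^2" using x1 by (simp add: one_le_power)
      ultimately show ?thesis by (simp add: power2_eq_square algebra_simps)
    qed
    have d: "x \<le> (4/L) * exp (L * x / 4)"
    proof -
      have "1 + L * x / 4 \<le> exp (L * x / 4)" by (rule exp_ge_add_one_self)
      then have "L * x / 4 \<le> exp (L * x / 4)" by linarith
      then have "(4/L) * (L * x / 4) \<le> (4/L) * exp (L * x / 4)"
        using L0 by (intro mult_left_mono) auto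
      then show ?thesis using L0 by simp
    qed
    have e: "x^2 \<le> (16/L^2) * exp (L * x / 2)"
    proof -
      have "x^2 \<le> ((4/L) * exp (L * x / 4))^2"
        using d x1 by (intro power_mono) auto
      also have "\<dots> = (16/L^2) * (exp (L * x / 4))^2" by (simp add: power_mult_distrib power_divide)
      also have "(exp (L * x / 4))^2 = exp (L * x / 2)"
        by (simp add: power2_eq_square exp_add[symmetric])
      finally show ?thesis .
    qed
    have f: "sqrt x / 2 \<le> L * x / 2 + 1 / (8 * L)"
    proof -
      have sq: "(sqrt x)^2 = x" using x1 by simp
      have "0 \<le> (L * sqrt x - 1/2)^2 / (2 * L)" using L0 by simp
      also have "(L * sqrt x - 1/2)^2 / (2 * L) = L * x / 2 - sqrt x / 2 + 1 / (8 * L)"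
        using L0 sq by (simp add: power2_eq_square field_simps)
      finally show ?thesis by simp
    qed
    have rr: "r^(n-1) = exp (- L * x) / r" using rn1 rn by simp
    have "(1 + (x + 1)^2) * r^(n-1) \<le> 5 * x^2 * r^(n-1)"
      using r0 by (intro mult_right_mono[OF c]) simp
    also have "\<dots> = 5 * x^2 * (exp (- L * x) / r)" by (simp only: rr)
    also have "\<dots> \<le> 5 * ((16/L^2) * exp (L * x / 2)) * (exp (- L * x) / r)"
      using e r0 by (intro mult_right_mono mult_left_mono) auto
    also have "\<dots> = 80 / (L^2 * r) * (exp (L * x / 2) * exp (- L * x))"
      by (simp add: field_simps)
    also have "exp (L * x / 2) * exp (- L * x) = exp (- (L * x / 2))"
      by (simp add: exp_add[symmetric])
    finally have A: "(1 + (x + 1)^2) * r^(n-1) \<le> 80 / (L^2 * r) * exp (- (L * x / 2))" .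
    have "exp (- (L * x / 2)) \<le> exp (1 / (8 * L) - sqrt x / 2)"
      using f by simp
    also have "\<dots> = exp (1 / (8 * L)) * exp (- sqrt x / 2)"
      by (subst exp_add[symmetric]) simp
    finally have B: "exp (- (L * x / 2)) \<le> exp (1 / (8 * L)) * exp (- sqrt x / 2)" .
    have "80 / (L^2 * r) * exp (- (L * x / 2)) \<le> 80 / (L^2 * r) * (exp (1 / (8 * L)) * exp (- sqrt x / 2))"
      using B L0 r0 by (intro mult_left_mono) auto
    also have "\<dots> = K * exp (- sqrt x / 2)" unfolding K_def by simp
    finally show ?thesis using A unfolding x_def by linarith
  qed
  then show ?thesis using K0 by blast
qed


theorem corollary6p2:
  fixes p :: real
  assumes "0 < p" and "p < 1"
  shows "\<exists>C > 0. \<forall>(P::real) (n::nat) (q :: nat set \<Rightarrow> real).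
           p \<le> P \<and> P < 1 \<and> (\<forall>\<sigma> \<in> faces n. p \<le> q \<sigma> \<and> q \<sigma> \<le> P) \<longrightarrow>
           measure_pmf.prob (lower_hyp_pmf n q)
             {f. complex_connected (largest_complex (hyp_of n f))}
           \<ge> 1 - C * exp (- sqrt (real n) / 2)"
proof -
  have p0: "0 < p" and p1: "p < 1" using assms by auto
  define r where "r = 1 - p^3"
  have p3: "p^3 \<le> p" using p0 p1 by (simp add: power_le_one power_le_imp_le_exp less_imp_le
        power_decreasing[of 1 3 p, simplified])
  have p3pos: "0 < p^3" using p0 by simp
  have r0: "0 < r" using p3 p1 unfolding r_def by linarith
  have r1: "r < 1" using p3pos unfolding r_def by linarith
  obtain K where K0: "K > 0" and Kb: "\<forall>n::nat. n \<ge> 1 \<longrightarrow> (1 + (real n + 1)^2) * r^(n-1) \<le> K * exp (- sqrt (real n) / 2)"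
    using analytic_bound[OF r0 r1] by blast
  define C where "C = max 3 K"
  have C0: "C > 0" unfolding C_def by simp
  have "p \<le> P \<and> P < 1 \<and> (\<forall>\<sigma> \<in> faces n. p \<le> q \<sigma> \<and> q \<sigma> \<le> P) \<longrightarrow>
           measure_pmf.prob (lower_hyp_pmf n q)
             {f. complex_connected (largest_complex (hyp_of n f))}
           \<ge> 1 - C * exp (- sqrt (real n) / 2)" for P n q
  proof
    assume H: "p \<le> P \<and> P < 1 \<and> (\<forall>\<sigma> \<in> faces n. p \<le> q \<sigma> \<and> q \<sigma> \<le> P)"
    then have P1: "P < 1" and q: "\<forall>\<sigma> \<in> faces n. p \<le> q \<sigma> \<and> q \<sigma> \<le> P" by auto
    define Good where "Good = {f. complex_connected (largest_complex (hyp_of n f))}"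
    show "measure_pmf.prob (lower_hyp_pmf n q)
             {f. complex_connected (largest_complex (hyp_of n f))}
           \<ge> 1 - C * exp (- sqrt (real n) / 2)"
    proof (cases "n \<ge> 2")
      case False
      then have "real n \<le> 1" by simp
      then have "sqrt (real n) \<le> 1" by simp
      then have "exp (- sqrt (real n) / 2) \<ge> 1/2"
        using exp_ge_add_one_self[of "- sqrt (real n) / 2"] by linarith
      moreover have "C \<ge> 3" unfolding C_def by simp
      ultimately have "C * exp (- sqrt (real n) / 2) \<ge> 3 * (1/2)"
        by (intro mult_mono) auto
      then have "1 - C * exp (- sqrt (real n) / 2) \<le> 0" by simp
      then show ?thesis using measure_nonneg order_trans by blast
    next
      case True
      note n2 = True
      define E0 where "E0 = {f. \<forall>v\<in>{0..n}. \<not> f {v}}"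
      define B where "B x = {f. \<forall>w\<in>{0..n} - {fst x, snd x}. \<not> (f {w} \<and> f {fst x, w} \<and> f {snd x, w})}"
        for x :: "nat \<times> nat"
      define Pairs where "Pairs = {x \<in> {0..n} \<times> {0..n}. fst x \<noteq> snd x}"
      have finPairs: "finite Pairs" unfolding Pairs_def by simp
      have cardPairs: "real (card Pairs) \<le> (real n + 1)^2"
      proof -
        have "card Pairs \<le> card ({0..n} \<times> {0..n})"
          unfolding Pairs_def by (intro card_mono) auto
        also have "\<dots> = (n + 1) * (n + 1)" by (simp add: card_cartesian_product)
        finally have "real (card Pairs) \<le> real ((n + 1) * (n + 1))" by linarith
        then show ?thesis by (simp add: power2_eq_square algebra_simps)
      qed
      have sub: "UNIV - Good \<subseteq> E0 \<union> (\<Union>x\<in>Pairs. B x)"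
      proof
        fix f assume f: "f \<in> UNIV - Good"
        show "f \<in> E0 \<union> (\<Union>x\<in>Pairs. B x)"
        proof (rule ccontr)
          assume nf: "f \<notin> E0 \<union> (\<Union>x\<in>Pairs. B x)"
          have ex: "\<exists>v\<in>{0..n}. f {v}" using nf unfolding E0_def by auto
          have tr: "\<forall>u\<in>{0..n}. \<forall>v\<in>{0..n}. u \<noteq> v \<longrightarrow> (\<exists>w\<in>{0..n} - {u, v}. f {w} \<and> f {u, w} \<and> f {v, w})"
          proof (intro ballI impI)
            fix u v assume u: "u \<in> {0..n}" and v: "v \<in> {0..n}" and uv: "u \<noteq> v"
            then have "(u, v) \<in> Pairs" unfolding Pairs_def by simp
            then have "f \<notin> B (u, v)" using nf by blast
            then show "\<exists>w\<in>{0..n} - {u, v}. f {w} \<and> f {u, w} \<and> f {v, w}" unfolding B_def by auto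
          qed
          have "f \<in> Good" unfolding Good_def using connected_suff[OF n2 ex tr] by simp
          then show False using f by simp
        qed
      qed
      let ?M = "lower_hyp_pmf n q"
      have "measure_pmf.prob ?M (UNIV - Good) \<le> measure_pmf.prob ?M (E0 \<union> (\<Union>x\<in>Pairs. B x))"
        using sub by (intro measure_pmf.finite_measure_mono) auto
      also have "\<dots> \<le> measure_pmf.prob ?M E0 + measure_pmf.prob ?M (\<Union>x\<in>Pairs. B x)"
        by (rule measure_Un_le) auto
      also have "measure_pmf.prob ?M (\<Union>x\<in>Pairs. B x) \<le> (\<Sum>x\<in>Pairs. measure_pmf.prob ?M (B x))"
        using finPairs by (intro measure_pmf.finite_measure_subadditive_finite) auto
      also have "\<dots> \<le> (\<Sum>x\<in>Pairs. r^(n-1))"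
      proof (rule sum_mono)
        fix x assume x: "x \<in> Pairs"
        then have "fst x \<le> n" "snd x \<le> n" "fst x \<noteq> snd x" unfolding Pairs_def by auto
        then show "measure_pmf.prob ?M (B x) \<le> r^(n-1)"
          unfolding B_def r_def using triple_bound[OF n2 p0 P1 q] by blast
      qed
      also have "\<dots> = real (card Pairs) * r^(n-1)" by simp
      also have "measure_pmf.prob ?M E0 \<le> r^(n-1)"
      proof -
        have "measure_pmf.prob ?M E0 \<le> (1 - p)^(n+1)"
          unfolding E0_def using empty_bound[OF _ p0 P1 q] n2 by simp
        also have "(1 - p)^(n+1) \<le> r^(n+1)"
          using p3 p1 unfolding r_def by (intro power_mono) auto
        also have "r^(n+1) \<le> r^(n-1)"
          using r0 r1 by (intro power_decreasing) auto
        finally show ?thesis .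
      qed
      finally have bad: "measure_pmf.prob ?M (UNIV - Good) \<le> r^(n-1) + real (card Pairs) * r^(n-1)"
        by simp
      have "r^(n-1) + real (card Pairs) * r^(n-1) \<le> r^(n-1) + (real n + 1)^2 * r^(n-1)"
        using cardPairs r0 by (intro add_left_mono mult_right_mono) auto
      also have "\<dots> = (1 + (real n + 1)^2) * r^(n-1)" by (simp add: algebra_simps)
      also have "\<dots> \<le> K * exp (- sqrt (real n) / 2)" using Kb n2 by simp
      also have "\<dots> \<le> C * exp (- sqrt (real n) / 2)" unfolding C_def by (intro mult_right_mono) auto
      finally have bad2: "measure_pmf.prob ?M (UNIV - Good) \<le> C * exp (- sqrt (real n) / 2)"
        using bad by linarith
      have "measure_pmf.prob ?M (UNIV - Good) = 1 - measure_pmf.prob ?M Good"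
        using measure_pmf.prob_compl[of Good ?M] by simp
      then show ?thesis using bad2 unfolding Good_def by linarith
    qed
  qed
  then show ?thesis using C0 by blast
qed

end
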